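(* Let $\ell$ be a positive odd integer, $p$ an odd prime, and $n$ a positive integer with $p^2\mid\Omega_\ell(n)$. Suppose there exist a divisor $d_1$ of $\ell$ and an integer $a$ with $2\le a\le n$ such that $p\,\|\,a^{d_1}+1$ (i.e. $p\mid a^{d_1}+1$ and $p^2\nmid a^{d_1}+1$), and suppose that $p\nmid b^{\gcd(\ell,p-1)}+1$ for every integer $b$ with $2\le b\le n$, $b\ne a$. Then $p\mid \ell$.
   Context: $\Omega_\ell(n)=\prod_{a=1}^{n}(a^\ell+1)$. *)

theory Defs
  imports "HOL-Computational_Algebra.Primes"
begin

definition Omega :: "nat \<Rightarrow> nat \<Rightarrow> nat" where
  "Omega l n = (\<Prod>a = 1..n. a ^ l + 1)"

end

theory Submission
  imports Defs "HOL-Number_Theory.Number_Theory"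
begin

lemma keyA_int:
  fixes p t :: int
  shows "\<exists>c. (p*t - 1)^k = (-1)^k * (1 - int k * p * t) + p^2 * c"
proof (induction k)
  case 0
  then show ?case by (intro exI[of _ 0]) simp
next
  case (Suc k)
  then obtain c where c: "(p*t - 1)^k = (-1)^k * (1 - int k * p * t) + p^2 * c" by blast
  have gen: "\<And>s::int. (p*t-1)*(s*(1 - int k * p * t) + p^2*c)
     = (-s)*(1 - int (Suc k) * p * t) + p^2*(-s*int k*t^2 + (p*t-1)*c)"
    by (simp add: algebra_simps power2_eq_square)
  have "(p*t - 1)^(Suc k) = (p*t-1) * ((-1)^k * (1 - int k * p * t) + p^2 * c)"
    by (simp only: power_Suc c)
  also have "\<dots> = (-1)^(Suc k) * (1 - int (Suc k) * p * t) + p^2*(- ((-1)^k)*int k*t^2 + (p*t-1)*c)"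
    unfolding gen by simp
  finally show ?case by blast
qed

lemma keyA:
  fixes p x k :: nat
  assumes "prime p" "p dvd x + 1" "\<not> p^2 dvd x + 1" "odd k" "p^2 dvd x^k + 1"
  shows "p dvd k"
proof -
  obtain t where t: "x + 1 = p * t" using assms(2) by blast
  have "int (x + 1) = int (p * t)" using t by simp
  hence xt: "int x = int p * int t - 1" by simp
  have nt: "\<not> p dvd t"
  proof
    assume "p dvd t"
    hence "p * p dvd p * t" by (rule mult_dvd_mono[OF dvd_refl])
    thus False using assms(3) t by (simp add: power2_eq_square)
  qed
  obtain c where c: "(int p * int t - 1)^k = (-1)^k * (1 - int k * int p * int t) + (int p)^2 * c"
    using keyA_int by blast
  have m1: "(-1::int)^k = -1" using assms(4) by simp
  have h: "int x ^ k = (-1)^k * (1 - int k * int p * int t) + (int p)^2 * c"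
    using c by (simp only: xt)
  have h2: "int x ^ k = (-1) * (1 - int k * int p * int t) + (int p)^2 * c"
    using h by (simp only: m1)
  have hh: "\<And>X::int. X = (-1) * (1 - int k * int p * int t) + (int p)^2 * c \<Longrightarrow> X + 1 = int k * int p * int t + (int p)^2 * c"
    by (simp add: algebra_simps)
  have "int x ^ k + 1 = int k * int p * int t + (int p)^2 * c"
    using hh[OF h2] .
  moreover have "int (p^2) dvd int (x ^ k + 1)"
    using assms(5) by (simp only: of_nat_dvd_iff)
  ultimately have "(int p)^2 dvd int k * int p * int t + (int p)^2 * c"
    by (simp only: of_nat_add of_nat_power of_nat_1)
  moreover have "(int p)^2 dvd (int p)^2 * c" by simp
  ultimately have "(int p)^2 dvd int k * int p * int t" by (simp only: dvd_add_left_iff)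
  hence "int p * int p dvd (int k * int t) * int p" by (simp add: power2_eq_square algebra_simps)
  hence "int p dvd int k * int t" using assms(1) by (simp add: prime_gt_0_nat)
  hence "int p dvd int (k * t)" by simp
  hence "p dvd k * t" by (simp only: of_nat_dvd_iff)
  thus ?thesis using nt assms(1) prime_dvd_mult_iff by blast
qed

lemma keyB:
  fixes p b l :: nat
  assumes "prime p" "odd p" "odd l" "p dvd b^l + 1"
  shows "p dvd b ^ gcd l (p - 1) + 1"
proof -
  define g where "g = gcd l (p - 1)"
  have p2: "p > 2"
  proof -
    have "p \<noteq> 2" using assms(2) by auto
    thus ?thesis using prime_ge_2_nat[OF assms(1)] by linarith
  qed
  have nb: "\<not> p dvd b"
  proof
    assume "p dvd b"
    hence "p dvd b^l" using assms(3) by (cases l) auto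
    hence "p dvd 1" using assms(4) by (metis dvd_add_right_iff)
    thus False using p2 by simp
  qed
  have ferm: "[int b ^ (p - 1) = 1] (mod int p)"
  proof -
    have "[b ^ (p - 1) = 1] (mod p)" using fermat_theorem[OF assms(1) nb] .
    hence "[int (b ^ (p - 1)) = int 1] (mod int p)" by (simp only: cong_int_iff)
    thus ?thesis by (simp only: of_nat_power of_nat_1)
  qed
  have hl: "[int b ^ l = -1] (mod int p)"
  proof -
    have "int p dvd int (b ^ l + 1)" using assms(4) by (simp only: of_nat_dvd_iff)
    hence "int p dvd int b ^ l + 1" by (simp only: of_nat_add of_nat_power of_nat_1)
    thus ?thesis by (simp add: cong_iff_dvd_diff)
  qed
  have l0: "l \<noteq> 0" using odd_pos[OF assms(3)] by simp
  obtain u v where uv: "l * u = (p - 1) * v + g" using bezout_nat[OF l0, of "p - 1"] g_def by blast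
  have "int b ^ (l*u) = (int b ^ l) ^ u" by (simp add: power_mult)
  hence c1: "[int b ^ (l*u) = (-1)^u] (mod int p)" using hl by (simp add: cong_pow)
  have E: "int b ^ (l*u) = (int b ^ (p-1)) ^ v * int b ^ g" by (simp add: uv power_add power_mult)
  have M: "[(int b ^ (p-1)) ^ v * int b ^ g = 1 ^ v * int b ^ g] (mod int p)"
    using ferm by (intro cong_mult cong_pow) auto
  have c3: "[int b ^ (l*u) = int b ^ g] (mod int p)" using M unfolding E by simp
  have c2: "[int b ^ g = (-1)^u] (mod int p)" using cong_trans[OF cong_sym[OF c3] c1] .
  show ?thesis
  proof (cases "odd u")
    case True
    hence "[int b ^ g = -1] (mod int p)" using c2 by simp
    hence "int p dvd int b ^ g + 1" by (simp add: cong_iff_dvd_diff)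
    hence "int p dvd int (b ^ g + 1)" by (simp only: of_nat_add of_nat_power of_nat_1)
    thus ?thesis unfolding g_def by (simp only: of_nat_dvd_iff)
  next
    case False
    hence g1: "[int b ^ g = 1] (mod int p)" using c2 by simp
    have "g dvd l" unfolding g_def by simp
    then obtain m where m: "l = g * m" by (elim dvdE)
    have "[(int b ^ g) ^ m = 1 ^ m] (mod int p)" using g1 by (intro cong_pow)
    hence "[int b ^ l = 1] (mod int p)" by (simp add: m power_mult)
    hence "[-1 = 1] (mod int p)" using cong_trans[OF cong_sym[OF hl]] by blast
    hence "int p dvd 2" by (simp add: cong_iff_dvd_diff)
    hence "int p dvd int 2" by simp
    hence "p dvd 2" by (simp only: of_nat_dvd_iff)
    thus ?thesis using p2 by (simp add: dvd_imp_le leD)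
  qed
qed

theorem lemma6:
  fixes l p n d1 a :: nat
  assumes "l > 0" and "odd l"
    and "prime p" and "odd p"
    and "n > 0"
    and "p^2 dvd Omega l n"
    and "d1 dvd l"
    and "2 \<le> a" and "a \<le> n"
    and "p dvd a ^ d1 + 1" and "\<not> p^2 dvd a ^ d1 + 1"
    and "\<forall>b. 2 \<le> b \<and> b \<le> n \<and> b \<noteq> a \<longrightarrow> \<not> p dvd b ^ gcd l (p - 1) + 1"
  shows "p dvd l"
proof -
  have p2: "p > 2"
  proof -
    have "p \<noteq> 2" using assms(4) by auto
    thus ?thesis using prime_ge_2_nat[OF assms(3)] by linarith
  qed
  define R where "R = (\<Prod>b \<in> {1..n} - {a}. b ^ l + 1)"
  have mem: "a \<in> {1..n}" using assms(8,9) by simp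
  have om: "Omega l n = (a^l + 1) * R" unfolding Omega_def R_def
    by (rule prod.remove[OF finite_atLeastAtMost mem])
  have "\<not> p dvd R"
  proof
    assume "p dvd R"
    have fin: "finite ({1..n} - {a})" by simp
    have "\<exists>b\<in>{1..n} - {a}. p dvd b^l + 1"
      using \<open>p dvd R\<close> unfolding R_def prime_dvd_prod_iff[OF fin assms(3)] .
    then obtain b where b: "b \<in> {1..n} - {a}" "p dvd b^l + 1" by blast
    show False
    proof (cases "b = 1")
      case True
      hence "p dvd 2" using b by (simp add: numeral_2_eq_2)
      hence "p \<le> 2" by (rule dvd_imp_le) simp
      with p2 show ?thesis by simp
    next
      case False
      hence "2 \<le> b" "b \<le> n" "b \<noteq> a" using b by auto
      moreover have "p dvd b ^ gcd l (p - 1) + 1" using keyB[OF assms(3,4,2) b(2)] .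
      ultimately show ?thesis using assms(12) by blast
    qed
  qed
  hence "coprime p R" using prime_imp_coprime[OF assms(3)] by blast
  hence cp: "coprime (p^2) R" by simp
  have "p^2 dvd (a^l + 1) * R" using assms(6) unfolding om .
  hence "p^2 dvd a^l + 1" using coprime_dvd_mult_left_iff[OF cp] by blast
  moreover obtain k where k: "l = d1 * k" using assms(7) by blast
  moreover have "odd k" using k assms(2) by simp
  moreover have "a^l = (a^d1)^k" by (simp only: k power_mult)
  ultimately have "p dvd k" using keyA[OF assms(3,10,11)] by simp
  thus ?thesis using k by simp
qed

end
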